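(* Let $\Omega\subset\mathbb{R}^3$ be a bounded domain and $N>0$. For all $u,v\in L^4(\Omega)^3$, $$\|F_N(u)\,u\otimes u-F_N(v)\,v\otimes v\|_{L^2}\leqslant 3N\|u-v\|_{L^4}\quad\text{and}\quad\|F_N(u)\,u\otimes u\|_{L^2}\leqslant N\|u\|_{L^4}.$$
   Context: $f_N(r)=\min\{1,N/r\}$ for $r\geqslant0$ (with $f_N(0)=1$), and $F_N(u)=f_N(\|u\|_{L^4(\Omega)^3})$. For $u,v:\Omega\to\mathbb{R}^3$, $u\otimes v$ is the matrix-valued function $(u_iv_j)_{i,j=1}^3$; $L^2$-norms of matrix-valued functions use the Frobenius (Euclidean) norm pointwise. $L^r$ denotes $L^r(\Omega)^3$ (or its matrix analogue). *)

theory Defs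
  imports "HOL-Analysis.Analysis"
begin

definition fN :: "real \<Rightarrow> real \<Rightarrow> real" where
  "fN N r = (if r = 0 then 1 else min 1 (N / r))"

text \<open>L^p norm on Omega w.r.t. Lebesgue measure, pointwise Euclidean norm
  (for matrix-valued functions real^3^3 this is the Frobenius norm).\<close>
definition Lp_norm :: "real \<Rightarrow> ('a::euclidean_space) set \<Rightarrow> ('a \<Rightarrow> 'b::real_normed_vector) \<Rightarrow> real" where
  "Lp_norm p \<Omega> u = (\<integral>x. norm (u x) powr p \<partial>(lebesgue_on \<Omega>)) powr (1 / p)"

definition in_Lp :: "real \<Rightarrow> ('a::euclidean_space) set \<Rightarrow> ('a \<Rightarrow> 'b::{real_normed_vector, second_countable_topology}) \<Rightarrow> bool" where
  "in_Lp p \<Omega> u \<longleftrightarrow> u \<in> borel_measurable (lebesgue_on \<Omega>) \<and>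
      integrable (lebesgue_on \<Omega>) (\<lambda>x. norm (u x) powr p)"

definition FN :: "real \<Rightarrow> (real^3) set \<Rightarrow> (real^3 \<Rightarrow> real^3) \<Rightarrow> real" where
  "FN N \<Omega> u = fN N (Lp_norm 4 \<Omega> u)"

definition tens :: "real^3 \<Rightarrow> real^3 \<Rightarrow> real^3^3" where
  "tens a b = (\<chi> i j. a $ i * b $ j)"

end

theory Submission
  imports Defs
begin

lemma cs_int:
  fixes f g :: "'a \<Rightarrow> real"
  assumes [measurable]: "f \<in> borel_measurable M" "g \<in> borel_measurable M"
    and "integrable M (\<lambda>x. f x ^ 2)" "integrable M (\<lambda>x. g x ^ 2)"
  shows "integrable M (\<lambda>x. f x * g x)"
proof (rule Bochner_Integration.integrable_bound[where f="\<lambda>x. f x ^ 2 + g x ^ 2"])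
  show "integrable M (\<lambda>x. f x ^ 2 + g x ^ 2)" using assms by auto
  show "AE x in M. norm (f x * g x) \<le> norm (f x ^ 2 + g x ^ 2)"
  proof (intro AE_I2)
    fix x
    have "2 * \<bar>f x * g x\<bar> \<le> f x ^ 2 + g x ^ 2"
    proof -
      have "0 \<le> (\<bar>f x\<bar> - \<bar>g x\<bar>)^2" by simp
      also have "\<dots> = f x ^ 2 + g x ^ 2 - 2 * \<bar>f x * g x\<bar>"
        by (simp add: power2_eq_square algebra_simps abs_mult)
      finally show ?thesis by simp
    qed
    then show "norm (f x * g x) \<le> norm (f x ^ 2 + g x ^ 2)" by simp
  qed
qed simp

lemma cs:
  fixes f g :: "'a \<Rightarrow> real"
  assumes [measurable]: "f \<in> borel_measurable M" "g \<in> borel_measurable M"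
    and i: "integrable M (\<lambda>x. f x ^ 2)" "integrable M (\<lambda>x. g x ^ 2)"
  shows "(\<integral>x. f x * g x \<partial>M) \<le> sqrt (\<integral>x. f x ^ 2 \<partial>M) * sqrt (\<integral>x. g x ^ 2 \<partial>M)"
proof -
  define A where "A = (\<integral>x. f x ^ 2 \<partial>M)"
  define B where "B = (\<integral>x. g x ^ 2 \<partial>M)"
  define C where "C = (\<integral>x. f x * g x \<partial>M)"
  have ifg: "integrable M (\<lambda>x. f x * g x)" using cs_int assms by blast
  have q: "0 \<le> A - 2*t*C + t^2*B" for t
  proof -
    have "0 \<le> (\<integral>x. (f x - t * g x)^2 \<partial>M)" by simp
    also have "(\<integral>x. (f x - t * g x)^2 \<partial>M) = (\<integral>x. f x^2 - 2*t*(f x * g x) + t^2*(g x^2) \<partial>M)"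
      by (rule Bochner_Integration.integral_cong) (auto simp: power2_eq_square algebra_simps)
    also have "\<dots> = A - 2*t*C + t^2*B"
      using i ifg unfolding A_def B_def C_def
      by (simp add: Bochner_Integration.integral_diff Bochner_Integration.integral_add)
    finally show ?thesis .
  qed
  have A0: "A \<ge> 0" "B \<ge> 0" unfolding A_def B_def by simp_all
  have "C \<le> sqrt A * sqrt B"
  proof (cases "C \<le> 0")
    case True then show ?thesis using A0 by (smt (verit) real_sqrt_ge_zero mult_nonneg_nonneg)
  next
    case False
    have "C^2 \<le> A * B"
    proof (cases "B = 0")
      case True
      have "0 \<le> A - 2*((A+1)/(2*C))*C + ((A+1)/(2*C))^2*B" by (rule q)
      with True False show ?thesis by (simp add: field_simps)
    next
      case Bn: False
      have "0 \<le> A - 2*(C/B)*C + (C/B)^2*B" by (rule q)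
      then have "0 \<le> A - C^2/B" using Bn by (simp add: field_simps power2_eq_square)
      then show ?thesis using Bn A0 by (simp add: field_simps)
    qed
    then have "sqrt (C^2) \<le> sqrt (A*B)" by (rule real_sqrt_le_mono)
    then show ?thesis using False by (simp add: real_sqrt_mult)
  qed
  then show ?thesis unfolding A_def B_def C_def .
qed

definition nq :: "'a measure \<Rightarrow> ('a \<Rightarrow> real) \<Rightarrow> real" where
  "nq M f = (\<integral>x. f x ^ 4 \<partial>M) powr (1/4)"

lemma nq_nonneg: "0 \<le> nq M f" unfolding nq_def by simp

lemma pow4_root: "0 \<le> (y::real) \<Longrightarrow> (y powr (1/4))^4 = y"
  by (simp add: powr_powr flip: powr_numeral)

lemma root_pow4: "0 \<le> (x::real) \<Longrightarrow> (x^4) powr (1/4) = x"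
  by (simp add: powr_powr flip: powr_numeral)

lemma sq_sq: "((a::real)^2)^2 = a^4"
  by (simp flip: power_mult)

lemma int4_nonneg: "0 \<le> (\<integral>x. (f x::real) ^ 4 \<partial>M)"
  by (rule Bochner_Integration.integral_nonneg) (metis sq_sq zero_le_power2)

lemma nq_pow: "(nq M f)^4 = (\<integral>x. f x ^ 4 \<partial>M)"
  unfolding nq_def using int4_nonneg by (rule pow4_root)

lemma nq_le:
  assumes "(\<integral>x. h x ^ 4 \<partial>M) \<le> c^4" "0 \<le> c"
  shows "nq M h \<le> c"
proof -
  have "nq M h \<le> (c^4) powr (1/4)" unfolding nq_def
    by (rule powr_mono2) (use assms int4_nonneg in auto)
  then show ?thesis using root_pow4[OF assms(2)] by simp
qed

lemma int4_mono:
  fixes h g :: "'a \<Rightarrow> real"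
  assumes "\<And>x. \<bar>h x\<bar> \<le> g x" "integrable M (\<lambda>x. g x ^ 4)"
  shows "(\<integral>x. h x ^ 4 \<partial>M) \<le> (\<integral>x. g x ^ 4 \<partial>M)"
proof (cases "integrable M (\<lambda>x. h x ^ 4)")
  case True
  show ?thesis
  proof (rule integral_mono[OF True assms(2)])
    fix x
    have "\<bar>h x\<bar> ^ 4 \<le> g x ^ 4" by (rule power_mono[OF assms(1)]) simp
    then show "h x ^ 4 \<le> g x ^ 4" by (simp add: power_even_abs_numeral)
  qed
next
  case False
  then show ?thesis by (simp add: not_integrable_integral_eq int4_nonneg)
qed

lemma nq_mono:
  fixes h g :: "'a \<Rightarrow> real"
  assumes "\<And>x. \<bar>h x\<bar> \<le> g x" "integrable M (\<lambda>x. g x ^ 4)"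
  shows "nq M h \<le> nq M g"
  using int4_mono[OF assms] by (metis nq_le nq_nonneg nq_pow)


lemma holder22:
  fixes f g :: "'a \<Rightarrow> real"
  assumes [measurable]: "f \<in> borel_measurable M" "g \<in> borel_measurable M"
    and i: "integrable M (\<lambda>x. f x ^ 4)" "integrable M (\<lambda>x. g x ^ 4)"
  shows "integrable M (\<lambda>x. f x ^ 2 * g x ^ 2)"
    "(\<integral>x. f x ^ 2 * g x ^ 2 \<partial>M) \<le> (nq M f)^2 * (nq M g)^2"
proof -
  have i2: "integrable M (\<lambda>x. (f x ^ 2) ^ 2)" "integrable M (\<lambda>x. (g x ^ 2) ^ 2)"
    using i by (simp_all add: sq_sq)
  show "integrable M (\<lambda>x. f x ^ 2 * g x ^ 2)"
    by (rule cs_int[OF _ _ i2]) simp_all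
  have "(\<integral>x. f x ^ 2 * g x ^ 2 \<partial>M) \<le> sqrt (\<integral>x. (f x ^ 2) ^ 2 \<partial>M) * sqrt (\<integral>x. (g x ^ 2) ^ 2 \<partial>M)"
    by (rule cs[OF _ _ i2]) simp_all
  also have "sqrt (\<integral>x. (f x ^ 2) ^ 2 \<partial>M) = (nq M f)^2"
    by (simp add: sq_sq flip: nq_pow) (metis power_mult real_sqrt_abs numeral_times_numeral semiring_norm(12) abs_power2 power2_eq_square num_double)
  also have "sqrt (\<integral>x. (g x ^ 2) ^ 2 \<partial>M) = (nq M g)^2"
    by (simp add: sq_sq flip: nq_pow) (metis power_mult real_sqrt_abs numeral_times_numeral semiring_norm(12) abs_power2 power2_eq_square num_double)
  finally show "(\<integral>x. f x ^ 2 * g x ^ 2 \<partial>M) \<le> (nq M f)^2 * (nq M g)^2" .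
qed

lemma cross31:
  fixes f g :: "'a \<Rightarrow> real"
  assumes [measurable]: "f \<in> borel_measurable M" "g \<in> borel_measurable M"
    and i: "integrable M (\<lambda>x. f x ^ 4)" "integrable M (\<lambda>x. g x ^ 4)"
  shows "integrable M (\<lambda>x. f x ^ 3 * g x)"
    "(\<integral>x. f x ^ 3 * g x \<partial>M) \<le> (nq M f)^3 * nq M g"
proof -
  have i2: "integrable M (\<lambda>x. (f x ^ 2) ^ 2)" using i by (simp add: sq_sq)
  have h22: "integrable M (\<lambda>x. f x ^ 2 * g x ^ 2)" "(\<integral>x. f x ^ 2 * g x ^ 2 \<partial>M) \<le> (nq M f)^2 * (nq M g)^2"
    using holder22[OF assms] by auto
  have i3: "integrable M (\<lambda>x. (f x * g x) ^ 2)" using h22(1) by (simp add: power_mult_distrib)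
  have e: "(\<lambda>x. f x ^ 2 * (f x * g x)) = (\<lambda>x. f x ^ 3 * g x)"
    by (rule ext) (simp add: power2_eq_square power3_eq_cube)
  have "integrable M (\<lambda>x. f x ^ 2 * (f x * g x))" by (rule cs_int[OF _ _ i2 i3]) simp_all
  then show "integrable M (\<lambda>x. f x ^ 3 * g x)" by (simp only: e)
  have "(\<integral>x. f x ^ 2 * (f x * g x) \<partial>M) \<le> sqrt (\<integral>x. (f x ^ 2) ^ 2 \<partial>M) * sqrt (\<integral>x. (f x * g x) ^ 2 \<partial>M)"
    by (rule cs[OF _ _ i2 i3]) simp_all
  also have "sqrt (\<integral>x. (f x ^ 2) ^ 2 \<partial>M) = (nq M f)^2"
    by (simp add: sq_sq flip: nq_pow) (metis power_mult real_sqrt_abs numeral_times_numeral semiring_norm(12) abs_power2 power2_eq_square num_double)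
  also have "sqrt (\<integral>x. (f x * g x) ^ 2 \<partial>M) \<le> sqrt (((nq M f) * (nq M g))^2)"
    using h22(2) by (simp add: power_mult_distrib)
  also have "sqrt (((nq M f) * (nq M g))^2) = nq M f * nq M g" by (simp add: abs_mult nq_nonneg)
  finally have "(\<integral>x. f x ^ 2 * (f x * g x) \<partial>M) \<le> (nq M f)^2 * (nq M f * nq M g)"
    by (simp add: mult_left_mono)
  then show "(\<integral>x. f x ^ 3 * g x \<partial>M) \<le> (nq M f)^3 * nq M g"
    by (simp only: e) (simp add: power3_eq_cube power2_eq_square mult_ac)
qed

lemma mink:
  fixes f g h :: "'a \<Rightarrow> real"
  assumes [measurable]: "f \<in> borel_measurable M" "g \<in> borel_measurable M"
    and i: "integrable M (\<lambda>x. f x ^ 4)" "integrable M (\<lambda>x. g x ^ 4)"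
    and b: "\<And>x. \<bar>h x\<bar> \<le> f x + g x"
  shows "nq M h \<le> nq M f + nq M g"
proof -
  note c1 = cross31[OF assms(1-4)]
  note c2 = cross31[OF assms(2,1) i(2,1)]
  note c3 = holder22[OF assms(1-4)]
  define A where "A = nq M f"
  define B where "B = nq M g"
  have e: "(\<lambda>x. (f x + g x) ^ 4) = (\<lambda>x. f x ^ 4 + (4 * (f x ^ 3 * g x) + (6 * (f x ^ 2 * g x ^ 2) + (4 * (g x ^ 3 * f x) + g x ^ 4))))"
    by (rule ext) (simp add: algebra_simps power2_eq_square power3_eq_cube power4_eq_xxxx)
  have int: "integrable M (\<lambda>x. (f x + g x) ^ 4)"
    unfolding e using i c1(1) c2(1) c3(1) by simp
  have "(\<integral>x. (f x + g x) ^ 4 \<partial>M) = (\<integral>x. f x ^ 4 \<partial>M) + (4 * (\<integral>x. f x ^ 3 * g x \<partial>M) + (6 * (\<integral>x. f x ^ 2 * g x ^ 2 \<partial>M) + (4 * (\<integral>x. g x ^ 3 * f x \<partial>M) + (\<integral>x. g x ^ 4 \<partial>M))))"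
    unfolding e using i c1(1) c2(1) c3(1) by (simp add: Bochner_Integration.integral_add)
  also have "\<dots> \<le> A^4 + (4 * (A^3 * B) + (6 * (A^2 * B^2) + (4 * (B^3 * A) + B^4)))"
    unfolding A_def B_def nq_pow[symmetric]
    using c1(2) c2(2) c3(2) by linarith
  also have "\<dots> = (A + B)^4"
    by (simp add: algebra_simps power2_eq_square power3_eq_cube power4_eq_xxxx)
  finally have "(\<integral>x. (f x + g x) ^ 4 \<partial>M) \<le> (A + B)^4" .
  with int4_mono[of h "\<lambda>x. f x + g x", OF b int]
  have "(\<integral>x. h x ^ 4 \<partial>M) \<le> (A + B)^4" by linarith
  then show ?thesis unfolding A_def B_def by (rule nq_le) (simp add: nq_nonneg add_nonneg_nonneg)
qed

definition n2 :: "'a measure \<Rightarrow> ('a \<Rightarrow> real) \<Rightarrow> real" where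
  "n2 M f = (\<integral>x. f x ^ 2 \<partial>M) powr (1/2)"

lemma l2:
  fixes f1 g1 f2 g2 h :: "'a \<Rightarrow> real"
  assumes [measurable]: "f1 \<in> borel_measurable M" "g1 \<in> borel_measurable M"
     "f2 \<in> borel_measurable M" "g2 \<in> borel_measurable M"
    and i: "integrable M (\<lambda>x. f1 x ^ 4)" "integrable M (\<lambda>x. g1 x ^ 4)"
       "integrable M (\<lambda>x. f2 x ^ 4)" "integrable M (\<lambda>x. g2 x ^ 4)"
    and st: "0 \<le> s" "0 \<le> t"
    and b: "\<And>x. \<bar>h x\<bar> \<le> s * (f1 x * g1 x) + t * (f2 x * g2 x)"
  shows "n2 M h \<le> s * (nq M f1 * nq M g1) + t * (nq M f2 * nq M g2)"
proof -
  define P where "P = nq M f1 * nq M g1"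
  define Q where "Q = nq M f2 * nq M g2"
  have P0: "0 \<le> P" "0 \<le> Q" unfolding P_def Q_def by (simp_all add: nq_nonneg)
  note h1 = holder22[OF assms(1,2) i(1,2)]
  note h2 = holder22[OF assms(3,4) i(3,4)]
  have iX: "integrable M (\<lambda>x. (f1 x * g1 x) ^ 2)" using h1(1) by (simp add: power_mult_distrib)
  have iY: "integrable M (\<lambda>x. (f2 x * g2 x) ^ 2)" using h2(1) by (simp add: power_mult_distrib)
  have X2: "(\<integral>x. (f1 x * g1 x) ^ 2 \<partial>M) \<le> P^2" using h1(2) by (simp add: power_mult_distrib P_def)
  have Y2: "(\<integral>x. (f2 x * g2 x) ^ 2 \<partial>M) \<le> Q^2" using h2(2) by (simp add: power_mult_distrib Q_def)
  have iXY: "integrable M (\<lambda>x. (f1 x * g1 x) * (f2 x * g2 x))" by (rule cs_int[OF _ _ iX iY]) simp_all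
  have "(\<integral>x. (f1 x * g1 x) * (f2 x * g2 x) \<partial>M) \<le> sqrt (\<integral>x. (f1 x * g1 x) ^ 2 \<partial>M) * sqrt (\<integral>x. (f2 x * g2 x) ^ 2 \<partial>M)"
    by (rule cs[OF _ _ iX iY]) simp_all
  also have "\<dots> \<le> sqrt (P^2) * sqrt (Q^2)"
    by (intro mult_mono real_sqrt_le_mono X2 Y2) simp_all
  also have "\<dots> = P * Q" using P0 by simp
  finally have XY: "(\<integral>x. (f1 x * g1 x) * (f2 x * g2 x) \<partial>M) \<le> P * Q" .
  have e: "(\<lambda>x. (s * (f1 x * g1 x) + t * (f2 x * g2 x)) ^ 2) = (\<lambda>x. s^2 * (f1 x * g1 x) ^ 2 + (2 * s * t * ((f1 x * g1 x) * (f2 x * g2 x)) + t^2 * (f2 x * g2 x) ^ 2))"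
    by (rule ext) (simp add: algebra_simps power2_eq_square)
  have intS: "integrable M (\<lambda>x. (s * (f1 x * g1 x) + t * (f2 x * g2 x)) ^ 2)"
    unfolding e using iX iY iXY by simp
  have "(\<integral>x. (s * (f1 x * g1 x) + t * (f2 x * g2 x)) ^ 2 \<partial>M) = s^2 * (\<integral>x. (f1 x * g1 x) ^ 2 \<partial>M) + (2 * s * t * (\<integral>x. (f1 x * g1 x) * (f2 x * g2 x) \<partial>M) + t^2 * (\<integral>x. (f2 x * g2 x) ^ 2 \<partial>M))"
    unfolding e using iX iY iXY by (simp add: Bochner_Integration.integral_add)
  also have "\<dots> \<le> s^2 * P^2 + (2 * s * t * (P * Q) + t^2 * Q^2)"
    using st by (intro add_mono mult_left_mono X2 Y2 XY) simp_all
  also have "\<dots> = (s * P + t * Q)^2" by (simp add: algebra_simps power2_eq_square)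
  finally have S: "(\<integral>x. (s * (f1 x * g1 x) + t * (f2 x * g2 x)) ^ 2 \<partial>M) \<le> (s * P + t * Q)^2" .
  have H: "(\<integral>x. h x ^ 2 \<partial>M) \<le> (s * P + t * Q)^2"
  proof (cases "integrable M (\<lambda>x. h x ^ 2)")
    case True
    have "(\<integral>x. h x ^ 2 \<partial>M) \<le> (\<integral>x. (s * (f1 x * g1 x) + t * (f2 x * g2 x)) ^ 2 \<partial>M)"
    proof (rule integral_mono[OF True intS])
      fix x
      have "\<bar>h x\<bar> ^ 2 \<le> (s * (f1 x * g1 x) + t * (f2 x * g2 x)) ^ 2" by (rule power_mono[OF b]) simp
      then show "h x ^ 2 \<le> (s * (f1 x * g1 x) + t * (f2 x * g2 x)) ^ 2" by simp
    qed
    then show ?thesis using S by linarith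
  next
    case False then show ?thesis by (simp add: not_integrable_integral_eq)
  qed
  have "n2 M h = sqrt (\<integral>x. h x ^ 2 \<partial>M)" unfolding n2_def
    by (rule powr_half_sqrt) (rule Bochner_Integration.integral_nonneg, simp)
  also have "\<dots> \<le> sqrt ((s * P + t * Q)^2)" using H by (rule real_sqrt_le_mono)
  also have "\<dots> = s * P + t * Q" using P0 st by simp
  finally show ?thesis unfolding P_def Q_def .
qed

lemma int4_bound:
  fixes f g h :: "'a \<Rightarrow> real"
  assumes [measurable]: "f \<in> borel_measurable M" "g \<in> borel_measurable M" "h \<in> borel_measurable M"
    and i: "integrable M (\<lambda>x. f x ^ 4)" "integrable M (\<lambda>x. g x ^ 4)"
    and b: "\<And>x. \<bar>h x\<bar> \<le> f x + g x"
  shows "integrable M (\<lambda>x. h x ^ 4)"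
proof -
  note c1 = cross31[OF assms(1,2) i]
  note c2 = cross31[OF assms(2,1) i(2,1)]
  note c3 = holder22[OF assms(1,2) i]
  have e: "(\<lambda>x. (f x + g x) ^ 4) = (\<lambda>x. f x ^ 4 + (4 * (f x ^ 3 * g x) + (6 * (f x ^ 2 * g x ^ 2) + (4 * (g x ^ 3 * f x) + g x ^ 4))))"
    by (rule ext) (simp add: algebra_simps power2_eq_square power3_eq_cube power4_eq_xxxx)
  have int: "integrable M (\<lambda>x. (f x + g x) ^ 4)"
    unfolding e using i c1(1) c2(1) c3(1) by simp
  show ?thesis
  proof (rule Bochner_Integration.integrable_bound[OF int], simp, rule AE_I2)
    fix x
    have "\<bar>h x\<bar> ^ 4 \<le> (f x + g x) ^ 4" by (rule power_mono[OF b]) simp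
    moreover have "0 \<le> f x + g x" using b[of x] by linarith
    ultimately show "norm (h x ^ 4) \<le> norm ((f x + g x) ^ 4)"
      by (simp add: power_even_abs_numeral abs_power_minus)
  qed
qed

lemma nq_scale:
  fixes f :: "'a \<Rightarrow> real"
  assumes "0 \<le> c"
  shows "nq M (\<lambda>x. c * f x) = c * nq M f"
proof -
  have "(\<integral>x. (c * f x) ^ 4 \<partial>M) = c^4 * (\<integral>x. f x ^ 4 \<partial>M)"
    by (simp add: power_mult_distrib)
  then have "nq M (\<lambda>x. c * f x) = (c^4 * (\<integral>x. f x ^ 4 \<partial>M)) powr (1/4)"
    unfolding nq_def by simp
  also have "\<dots> = (c^4) powr (1/4) * nq M f"
    unfolding nq_def by (rule powr_mult)
  also have "\<dots> = c * nq M f" using root_pow4[OF assms] by simp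
  finally show ?thesis .
qed

lemma tens_row: "tens a b $ i = (a $ i) *\<^sub>R b"
  unfolding tens_def by (simp add: vec_eq_iff)

lemma norm_tens: "norm (tens a b) = norm a * norm b"
proof -
  have "norm (tens a b) = L2_set (\<lambda>i. norm (tens a b $ i)) UNIV" by (simp add: norm_vec_def)
  also have "\<dots> = L2_set (\<lambda>i. norm (a $ i) * norm b) UNIV" by (simp add: tens_row)
  also have "\<dots> = L2_set (\<lambda>i. norm (a $ i)) UNIV * norm b" by (simp add: L2_set_left_distrib)
  also have "\<dots> = norm a * norm b" by (simp add: norm_vec_def)
  finally show ?thesis .
qed

lemma tens_id: "al *\<^sub>R tens u u - be *\<^sub>R tens v v = tens (al *\<^sub>R u - be *\<^sub>R v) u + be *\<^sub>R tens v (u - v)"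
  unfolding tens_def by (simp add: vec_eq_iff algebra_simps)

lemma Lp4_nq: "Lp_norm 4 \<Omega> u = nq (lebesgue_on \<Omega>) (\<lambda>x. norm (u x))"
  unfolding Lp_norm_def nq_def by simp

lemma Lp2_n2: "Lp_norm 2 \<Omega> u = n2 (lebesgue_on \<Omega>) (\<lambda>x. norm (u x))"
  unfolding Lp_norm_def n2_def by simp

lemma inLp4: "in_Lp 4 \<Omega> u \<Longrightarrow> (\<lambda>x. norm (u x)) \<in> borel_measurable (lebesgue_on \<Omega>) \<and> integrable (lebesgue_on \<Omega>) (\<lambda>x. norm (u x) ^ 4)"
proof -
  assume "in_Lp 4 \<Omega> u"
  then have [measurable]: "u \<in> borel_measurable (lebesgue_on \<Omega>)"
    and "integrable (lebesgue_on \<Omega>) (\<lambda>x. norm (u x) ^ 4)" unfolding in_Lp_def by auto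
  moreover have "(\<lambda>x. norm (u x)) \<in> borel_measurable (lebesgue_on \<Omega>)" by measurable
  ultimately show ?thesis by simp
qed

lemma fN_eq: "0 \<le> a \<Longrightarrow> 0 < N \<Longrightarrow> fN N a = (if a \<le> N then 1 else N / a)"
  unfolding fN_def by (auto simp: min_def field_simps)

lemma fN_props:
  assumes "0 \<le> a" "0 < N"
  shows "0 \<le> fN N a" "fN N a \<le> 1" "fN N a * a \<le> N"
  using assms by (auto simp: fN_eq field_simps)

lemma scal:
  fixes a b d N :: real
  assumes N: "N > 0" and ab: "0 \<le> a" "0 \<le> b" and d: "\<bar>a - b\<bar> \<le> d"
  shows "a * (fN N a * d + \<bar>fN N a - fN N b\<bar> * b) \<le> 2 * N * d"
proof -
  have d0: "0 \<le> d" using d by linarith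
  show ?thesis
  proof (cases "a \<le> N")
    case aN: True
    have ad: "a * d \<le> N * d" using aN d0 by (rule mult_right_mono)
    show ?thesis
    proof (cases "b \<le> N")
      case True
      have Nd: "0 \<le> N * d" using N d0 by simp
      have "a * (fN N a * d + \<bar>fN N a - fN N b\<bar> * b) = a * d" using True aN ab N by (simp add: fN_eq)
      then show ?thesis using Nd ad by linarith
    next
      case False
      have bpos: "b > 0" using False N by linarith
      have e: "a * (fN N a * d + \<bar>fN N a - fN N b\<bar> * b) = a * d + a * (b - N)"
        using aN False ab N bpos by (simp add: fN_eq field_simps)
      have "a * b \<le> N * b" using aN ab(2) by (rule mult_right_mono)
      then have "a * (b - N) \<le> N * (b - a)" by (simp add: algebra_simps)
      also have "N * (b - a) \<le> N * d" using d N by (intro mult_left_mono) auto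
      finally show ?thesis using e ad by linarith
    qed
  next
    case aN: False
    have apos: "a > 0" using aN N by linarith
    show ?thesis
    proof (cases "b \<le> N")
      case True
      have e: "a * (fN N a * d + \<bar>fN N a - fN N b\<bar> * b) = N * d + (a - N) * b"
        using aN True ab N apos by (simp add: fN_eq field_simps abs_if)
      have "(a - N) * b \<le> (a - N) * N" using aN True by (intro mult_left_mono) auto
      also have "\<dots> \<le> (a - b) * N" using True N by (intro mult_right_mono) auto
      also have "\<dots> \<le> d * N" using d N by (intro mult_right_mono) auto
      finally show ?thesis using e by (simp add: mult.commute)
    next
      case False
      have bpos: "b > 0" using False N by linarith
      have "N / a - N / b = N * (b - a) / (a * b)"
        using apos bpos N by (simp add: field_simps)
      then have "\<bar>N / a - N / b\<bar> = N * \<bar>b - a\<bar> / (a * b)"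
        using apos bpos N by (simp add: abs_div abs_mult)
      then have e: "a * (fN N a * d + \<bar>fN N a - fN N b\<bar> * b) = N * d + N * \<bar>b - a\<bar>"
        using aN False ab N apos bpos by (simp add: fN_eq field_simps)
      have "N * \<bar>b - a\<bar> \<le> N * d" using d N by (intro mult_left_mono) auto
      then show ?thesis using e by linarith
    qed
  qed
qed

theorem lemma3p1:
  fixes \<Omega> :: "(real^3) set" and N :: real and u v :: "real^3 \<Rightarrow> real^3"
  assumes "open \<Omega>" "connected \<Omega>" "\<Omega> \<noteq> {}" "bounded \<Omega>"
    and "N > 0"
    and "in_Lp 4 \<Omega> u" "in_Lp 4 \<Omega> v"
  shows "(Lp_norm 2 \<Omega> (\<lambda>x. FN N \<Omega> u *\<^sub>R tens (u x) (u x) - FN N \<Omega> v *\<^sub>R tens (v x) (v x))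
           \<le> 3 * N * Lp_norm 4 \<Omega> (\<lambda>x. u x - v x))
         \<and> Lp_norm 2 \<Omega> (\<lambda>x. FN N \<Omega> u *\<^sub>R tens (u x) (u x)) \<le> N * Lp_norm 4 \<Omega> u"
proof -
  define M where "M = lebesgue_on \<Omega>"
  have N: "N > 0" by fact
  have [measurable]: "u \<in> borel_measurable M" "v \<in> borel_measurable M"
    using assms(6,7) unfolding in_Lp_def M_def by auto
  have mu[measurable]: "(\<lambda>x. norm (u x)) \<in> borel_measurable M" and iu: "integrable M (\<lambda>x. norm (u x) ^ 4)"
    using inLp4[OF assms(6)] unfolding M_def by auto
  have mv[measurable]: "(\<lambda>x. norm (v x)) \<in> borel_measurable M" and iv: "integrable M (\<lambda>x. norm (v x) ^ 4)"
    using inLp4[OF assms(7)] unfolding M_def by auto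
  have md[measurable]: "(\<lambda>x. norm (u x - v x)) \<in> borel_measurable M" by measurable
  have id: "integrable M (\<lambda>x. norm (u x - v x) ^ 4)"
    by (rule int4_bound[OF mu mv md iu iv]) (simp add: norm_triangle_ineq4)
  define a where "a = nq M (\<lambda>x. norm (u x))"
  define b where "b = nq M (\<lambda>x. norm (v x))"
  define d where "d = nq M (\<lambda>x. norm (u x - v x))"
  have a0: "0 \<le> a" "0 \<le> b" "0 \<le> d" unfolding a_def b_def d_def by (simp_all add: nq_nonneg)
  define al where "al = FN N \<Omega> u"
  define be where "be = FN N \<Omega> v"
  have al: "al = fN N a" "be = fN N b" unfolding al_def be_def FN_def a_def b_def M_def Lp4_nq by simp_all
  have alp: "0 \<le> al" "al \<le> 1" "al * a \<le> N" using fN_props[OF a0(1) N] al by auto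
  have bep: "0 \<le> be" "be \<le> 1" "be * b \<le> N" using fN_props[OF a0(2) N] al by auto
  have "a \<le> d + b"
    unfolding a_def b_def d_def
    by (rule mink[OF md mv id iv]) (simp, metis add.commute norm_triangle_sub)
  moreover have "b \<le> d + a"
    unfolding a_def b_def d_def
    by (rule mink[OF md mu id iu]) (simp, metis add.commute norm_minus_commute norm_triangle_sub)
  ultimately have ab: "\<bar>a - b\<bar> \<le> d" by linarith
  define w where "w = nq M (\<lambda>x. norm (al *\<^sub>R u x - be *\<^sub>R v x))"
  have w0: "0 \<le> w" unfolding w_def by (simp add: nq_nonneg)
  have mw[measurable]: "(\<lambda>x. norm (al *\<^sub>R u x - be *\<^sub>R v x)) \<in> borel_measurable M" by measurable
  have ptw: "norm (al *\<^sub>R u x - be *\<^sub>R v x) \<le> al * norm (u x - v x) + \<bar>al - be\<bar> * norm (v x)" for x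
  proof -
    have "al *\<^sub>R u x - be *\<^sub>R v x = al *\<^sub>R (u x - v x) + (al - be) *\<^sub>R v x" by (simp add: algebra_simps)
    also have "norm \<dots> \<le> norm (al *\<^sub>R (u x - v x)) + norm ((al - be) *\<^sub>R v x)" by (rule norm_triangle_ineq)
    finally show ?thesis using alp by simp
  qed
  have iw: "integrable M (\<lambda>x. norm (al *\<^sub>R u x - be *\<^sub>R v x) ^ 4)"
  proof (rule int4_bound[OF mu mv mw iu iv])
    fix x
    have "norm (al *\<^sub>R u x - be *\<^sub>R v x) \<le> norm (al *\<^sub>R u x) + norm (be *\<^sub>R v x)" by (rule norm_triangle_ineq4)
    also have "\<dots> \<le> norm (u x) + norm (v x)" using alp bep
      by (simp add: mult_left_le_one_le add_mono)
    finally show "\<bar>norm (al *\<^sub>R u x - be *\<^sub>R v x)\<bar> \<le> norm (u x) + norm (v x)" by simp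
  qed
  have wle: "w \<le> al * d + \<bar>al - be\<bar> * b"
  proof -
    have md2[measurable]: "(\<lambda>x. al * norm (u x - v x)) \<in> borel_measurable M" by measurable
    have mv2[measurable]: "(\<lambda>x. \<bar>al - be\<bar> * norm (v x)) \<in> borel_measurable M" by measurable
    have id2: "integrable M (\<lambda>x. (al * norm (u x - v x)) ^ 4)" using id by (simp add: power_mult_distrib)
    have iv2: "integrable M (\<lambda>x. (\<bar>al - be\<bar> * norm (v x)) ^ 4)" using iv by (simp add: power_mult_distrib)
    have "w \<le> nq M (\<lambda>x. al * norm (u x - v x)) + nq M (\<lambda>x. \<bar>al - be\<bar> * norm (v x))"
      unfolding w_def by (rule mink[OF md2 mv2 id2 iv2]) (simp add: ptw)
    also have "\<dots> = al * d + \<bar>al - be\<bar> * b"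
      unfolding d_def b_def using alp by (simp add: nq_scale)
    finally show ?thesis .
  qed
  have key: "a * w \<le> 2 * N * d"
  proof -
    have "a * w \<le> a * (al * d + \<bar>al - be\<bar> * b)" using wle a0(1) by (rule mult_left_mono)
    also have "\<dots> \<le> 2 * N * d" unfolding al by (rule scal[OF N a0(1,2) ab])
    finally show ?thesis .
  qed
  have part1: "Lp_norm 2 \<Omega> (\<lambda>x. al *\<^sub>R tens (u x) (u x) - be *\<^sub>R tens (v x) (v x)) \<le> 3 * N * d"
  proof -
    have "Lp_norm 2 \<Omega> (\<lambda>x. al *\<^sub>R tens (u x) (u x) - be *\<^sub>R tens (v x) (v x))
        = n2 M (\<lambda>x. norm (al *\<^sub>R tens (u x) (u x) - be *\<^sub>R tens (v x) (v x)))"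
      unfolding M_def by (rule Lp2_n2)
    also have "\<dots> \<le> 1 * (w * a) + be * (b * d)"
      unfolding w_def a_def b_def d_def
    proof (rule l2[OF mw mu mv md iw iu iv id])
      fix x
      have "norm (al *\<^sub>R tens (u x) (u x) - be *\<^sub>R tens (v x) (v x))
          = norm (tens (al *\<^sub>R u x - be *\<^sub>R v x) (u x) + be *\<^sub>R tens (v x) (u x - v x))"
        by (simp only: tens_id)
      also have "\<dots> \<le> norm (tens (al *\<^sub>R u x - be *\<^sub>R v x) (u x)) + norm (be *\<^sub>R tens (v x) (u x - v x))"
        by (rule norm_triangle_ineq)
      also have "\<dots> = 1 * (norm (al *\<^sub>R u x - be *\<^sub>R v x) * norm (u x)) + be * (norm (v x) * norm (u x - v x))"
        using bep by (simp add: norm_tens)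
      finally show "\<bar>norm (al *\<^sub>R tens (u x) (u x) - be *\<^sub>R tens (v x) (v x))\<bar>
          \<le> 1 * (norm (al *\<^sub>R u x - be *\<^sub>R v x) * norm (u x)) + be * (norm (v x) * norm (u x - v x))" by simp
    qed (use bep in simp_all)
    also have "\<dots> \<le> 2 * N * d + N * d"
    proof -
      have "be * (b * d) = (be * b) * d" by simp
      also have "\<dots> \<le> N * d" using bep a0 by (intro mult_right_mono) auto
      finally have "be * (b * d) \<le> N * d" .
      moreover have "w * a \<le> 2 * N * d" using key by (simp add: mult.commute)
      ultimately show ?thesis by linarith
    qed
    finally show ?thesis by simp
  qed
  have part2: "Lp_norm 2 \<Omega> (\<lambda>x. al *\<^sub>R tens (u x) (u x)) \<le> N * a"
  proof -
    have "Lp_norm 2 \<Omega> (\<lambda>x. al *\<^sub>R tens (u x) (u x)) = n2 M (\<lambda>x. norm (al *\<^sub>R tens (u x) (u x)))"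
      unfolding M_def by (rule Lp2_n2)
    also have "\<dots> \<le> al * (a * a) + 0 * (a * a)"
      unfolding a_def
    proof (rule l2[OF mu mu mu mu iu iu iu iu])
      fix x
      show "\<bar>norm (al *\<^sub>R tens (u x) (u x))\<bar> \<le> al * (norm (u x) * norm (u x)) + 0 * (norm (u x) * norm (u x))"
        using alp by (simp add: norm_tens)
    qed (use alp in simp_all)
    also have "\<dots> = (al * a) * a" by simp
    also have "\<dots> \<le> N * a" using alp a0 by (intro mult_right_mono) auto
    finally show ?thesis .
  qed
  show ?thesis using part1 part2 unfolding al_def be_def d_def a_def M_def Lp4_nq[symmetric] by simp
qed

end
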